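(* Let $\mathcal Z=\{z\in\{0,1\}^{V}: z_v z_{v'}=0 \text{ for all } v\in V,\ v'\in\mathcal A(v)\}$ and let $\mathrm{conv}(\mathcal Z)\subset\mathbb R^{V}$ be its convex hull. Then $$\mathrm{conv}(\mathcal Z)=\Big\{\gamma\in\mathbb R^V:\ \gamma_v=\kappa_v\prod_{v'\in\mathcal A(v)}(1-\kappa_{v'})\ \forall v\in V,\ \text{for some }\kappa\in[0,1]^{V}\Big\}=\Big\{\gamma\in[0,1]^{V}:\ \sum_{v'\in\bar{\mathcal A}(v)}\gamma_{v'}\le 1\ \ \forall v\in V\Big\}.$$
   Context: $G=(V,E)$ is a finite directed rooted tree with vertex set $V=\{1,\dots,|V|\}$ and root $1$, edges oriented from parent to child. For $v\in V$: $\mathcal A(v)$ is the set of strict ancestors of $v$, $\bar{\mathcal A}(v)=\mathcal A(v)\cup\{v\}$, $\mathcal D(v)$ is the set of strict descendants of $v$, $\bar{\mathcal D}(v)=\mathcal D(v)\cup\{v\}$, and $d(v)$ is the number of children of $v$. *)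

theory Defs
  imports "HOL-Analysis.Analysis"
begin

definition rooted_tree :: "('n::finite \<times> 'n) set \<Rightarrow> 'n \<Rightarrow> bool" where
  "rooted_tree E r \<longleftrightarrow>
     (\<forall>u. (u, r) \<notin> E) \<and>
     (\<forall>v. v \<noteq> r \<longrightarrow> (\<exists>!u. (u, v) \<in> E)) \<and>
     (\<forall>v. (r, v) \<in> E\<^sup>*)"

definition anc :: "('n \<times> 'n) set \<Rightarrow> 'n \<Rightarrow> 'n set" where
  "anc E v = {u. (u, v) \<in> E\<^sup>+}"

end

theory Submission imports Defs "HOL-Library.FuncSet" begin

lemma parent_unique:
  assumes "rooted_tree E r" "(y,z) \<in> E" "(y',z) \<in> E" shows "y' = y"
  using assms unfolding rooted_tree_def by metis

lemma anc_root: assumes "rooted_tree E r" shows "anc E r = {}"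
  using assms unfolding rooted_tree_def anc_def by (auto elim: tranclE)

lemma anc_step: assumes "rooted_tree E r" "(y,z) \<in> E"
  shows "anc E z = insert y (anc E y)"
proof
  show "anc E z \<subseteq> insert y (anc E y)"
  proof
    fix u assume "u \<in> anc E z"
    hence "(u,z) \<in> E\<^sup>+" by (simp add: anc_def)
    thus "u \<in> insert y (anc E y)"
    proof (cases rule: tranclE)
      case base thus ?thesis using parent_unique[OF assms] by blast
    next
      case (step w) thus ?thesis using parent_unique[OF assms, of w] by (auto simp: anc_def)
    qed
  qed
  show "insert y (anc E y) \<subseteq> anc E z"
    using assms(2) by (auto simp: anc_def intro: trancl_into_trancl)
qed

lemma acyclic_tree: assumes "rooted_tree E r" shows "v \<notin> anc E v"
proof -
  have "(r,v) \<in> E\<^sup>*" using assms unfolding rooted_tree_def by blast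
  thus ?thesis
  proof (induction rule: rtrancl_induct)
    case base thus ?case using anc_root[OF assms] by simp
  next
    case (step y z)
    show ?case
    proof
      assume "z \<in> anc E z"
      hence "z = y \<or> z \<in> anc E y" using anc_step[OF assms step(2)] by simp
      thus False
      proof
        assume "z = y" thus False using step by (auto simp: anc_def)
      next
        assume "z \<in> anc E y"
        hence "(y,y) \<in> E\<^sup>+" using step(2) unfolding anc_def by (simp add: trancl_into_trancl2)
        thus False using step(3) by (simp add: anc_def)
      qed
    qed
  qed
qed

lemma comparable_rt: assumes "rooted_tree E r" "(a,v) \<in> E\<^sup>*" "(a',v) \<in> E\<^sup>*"
  shows "(a,a') \<in> E\<^sup>* \<or> (a',a) \<in> E\<^sup>*"
  using assms(2,3)
proof (induction arbitrary: a' rule: rtrancl_induct)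
  case base thus ?case by simp
next
  case (step y z)
  from step.prems show ?case
  proof (cases rule: rtranclE)
    case base thus ?thesis using step by auto
  next
    case (step y')
    hence "y' = y" using parent_unique[OF assms(1)] \<open>(y,z)\<in>E\<close> by blast
    thus ?thesis using step \<open>\<And>a'. (a', y) \<in> E\<^sup>* \<Longrightarrow> _\<close> by blast
  qed
qed

lemma comparable_anc: assumes "rooted_tree E r" "u \<in> insert v (anc E v)" "u' \<in> insert v (anc E v)" "u \<noteq> u'"
  shows "u \<in> anc E u' \<or> u' \<in> anc E u"
proof -
  have "(u,v) \<in> E\<^sup>*" "(u',v) \<in> E\<^sup>*" using assms(2,3) by (auto simp: anc_def)
  hence "(u,u') \<in> E\<^sup>* \<or> (u',u) \<in> E\<^sup>*" by (rule comparable_rt[OF assms(1)])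
  thus ?thesis using assms(4) by (auto simp: anc_def rtrancl_eq_or_trancl)
qed

lemma Z_sub_C:
  assumes "rooted_tree E r"
    and z: "\<forall>v. z $ v \<in> {0::real, 1}" "\<forall>v. \<forall>v' \<in> anc E v. z $ v * z $ v' = 0"
  shows "(\<Sum>v' \<in> insert v (anc E v). z $ v') \<le> 1"
proof (cases "\<exists>u \<in> insert v (anc E v). z $ u = 1")
  case False
  hence "\<forall>u \<in> insert v (anc E v). z $ u = 0" using z(1) by auto
  hence "(\<Sum>v' \<in> insert v (anc E v). z $ v') = 0" by (intro sum.neutral) blast
  thus ?thesis by simp
next
  case True
  then obtain u where u: "u \<in> insert v (anc E v)" "z $ u = 1" by blast
  have "\<forall>u' \<in> insert v (anc E v) - {u}. z $ u' = 0"
  proof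
    fix u' assume h: "u' \<in> insert v (anc E v) - {u}"
    hence "u \<in> anc E u' \<or> u' \<in> anc E u" using comparable_anc[OF assms(1) u(1)] by blast
    hence "z $ u' * z $ u = 0" using z(2) by (metis mult.commute)
    thus "z $ u' = 0" using u(2) by simp
  qed
  hence "(\<Sum>v' \<in> insert v (anc E v). z $ v') = z $ u"
    using u(1) by (subst sum.remove[of _ u]) auto
  thus ?thesis using u by simp
qed

lemma C_convex: "convex {\<gamma> :: real ^ 'n. (\<forall>v. 0 \<le> \<gamma> $ v \<and> \<gamma> $ v \<le> 1) \<and>
               (\<forall>v. (\<Sum>v' \<in> insert v (anc E v). \<gamma> $ v') \<le> 1)}"
proof (unfold convex_def, safe)
  fix x y :: "real^'n" and u v :: real and w
  assume h: "\<forall>v. 0 \<le> x $ v \<and> x $ v \<le> 1" "\<forall>va. (\<Sum>v'\<in>insert va (anc E va). x $ v') \<le> 1"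
     "\<forall>v. 0 \<le> y $ v \<and> y $ v \<le> 1" "\<forall>va. (\<Sum>v'\<in>insert va (anc E va). y $ v') \<le> 1"
     "0 \<le> u" "0 \<le> v" "u + v = 1"
  show "0 \<le> (u *\<^sub>R x + v *\<^sub>R y) $ w" using h by simp
  show "(u *\<^sub>R x + v *\<^sub>R y) $ w \<le> 1"
    using h convex_bound_le[of "x$w" 1 "y$w" u v] by simp
  have "(\<Sum>v'\<in>insert w (anc E w). (u *\<^sub>R x + v *\<^sub>R y) $ v')
     = u * (\<Sum>v'\<in>insert w (anc E w). x $ v') + v * (\<Sum>v'\<in>insert w (anc E w). y $ v')"
    by (simp add: sum.distrib sum_distrib_left)
  also have "\<dots> \<le> 1" using h convex_bound_le by blast
  finally show "(\<Sum>v'\<in>insert w (anc E w). (u *\<^sub>R x + v *\<^sub>R y) $ v') \<le> 1" .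
qed

lemma C_sub_B:
  fixes E :: "('n::finite \<times> 'n) set" and \<gamma> :: "real^'n"
  assumes tr: "rooted_tree E r"
    and g: "\<forall>v. 0 \<le> \<gamma> $ v \<and> \<gamma> $ v \<le> 1" "\<forall>v. (\<Sum>v' \<in> insert v (anc E v). \<gamma> $ v') \<le> 1"
  shows "\<exists>\<kappa> :: real ^ 'n. (\<forall>v. 0 \<le> \<kappa> $ v \<and> \<kappa> $ v \<le> 1) \<and>
               (\<forall>v. \<gamma> $ v = \<kappa> $ v * (\<Prod>v' \<in> anc E v. 1 - \<kappa> $ v'))"
proof -
  define s where "s v = (\<Sum>v' \<in> anc E v. \<gamma> $ v')" for v
  have sg: "\<gamma> $ v + s v \<le> 1" for v
    using g(2)[rule_format, of v] acyclic_tree[OF tr, of v] by (simp add: s_def)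
  have s0: "0 \<le> s v" for v unfolding s_def using g(1) by (simp add: sum_nonneg)
  define \<kappa> :: "real^'n" where "\<kappa> = (\<chi> v. if s v < 1 then \<gamma> $ v / (1 - s v) else 0)"
  have k01: "0 \<le> \<kappa> $ v \<and> \<kappa> $ v \<le> 1" for v
    using sg[of v] g(1) by (auto simp: \<kappa>_def divide_simps)
  have kstep: "(1 - \<kappa> $ v) * (1 - s v) = 1 - s v - \<gamma> $ v" for v
  proof (cases "s v < 1")
    case True thus ?thesis by (simp add: \<kappa>_def field_simps)
  next
    case False
    hence "s v = 1" "\<gamma> $ v = 0" using sg[of v] g(1) by (smt (verit))+
    thus ?thesis by (simp add: \<kappa>_def)
  qed
  have P: "(\<Prod>v' \<in> anc E v. 1 - \<kappa> $ v') = 1 - s v" for v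
  proof -
    have "(r,v) \<in> E\<^sup>*" using tr unfolding rooted_tree_def by blast
    thus ?thesis
    proof (induction rule: rtrancl_induct)
      case base thus ?case using anc_root[OF tr] by (simp add: s_def)
    next
      case (step y z)
      have ny: "y \<notin> anc E y" by (rule acyclic_tree[OF tr])
      have "(\<Prod>v' \<in> anc E z. 1 - \<kappa> $ v') = (1 - \<kappa> $ y) * (1 - s y)"
        using anc_step[OF tr step(2)] ny step(3) by simp
      also have "\<dots> = 1 - s z"
        using kstep[of y] anc_step[OF tr step(2)] ny by (simp add: s_def)
      finally show ?case .
    qed
  qed
  have "\<gamma> $ v = \<kappa> $ v * (\<Prod>v' \<in> anc E v. 1 - \<kappa> $ v')" for v
  proof (cases "s v < 1")
    case True
    hence "\<kappa> $ v = \<gamma> $ v / (1 - s v)" by (simp add: \<kappa>_def)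
    thus ?thesis using True by (simp add: P)
  next
    case False
    hence "s v = 1" "\<gamma> $ v = 0" using sg[of v] g(1) by (smt (verit))+
    thus ?thesis by (simp add: P)
  qed
  thus ?thesis using k01 by blast
qed

lemma prod_bool_sum:
  fixes f :: "'n::finite \<Rightarrow> bool \<Rightarrow> real"
  shows "(\<Sum>b\<in>(UNIV :: ('n \<Rightarrow> bool) set). \<Prod>u\<in>UNIV. f u (b u)) = (\<Prod>u\<in>UNIV. f u True + f u False)"
proof -
  have "(\<Prod>u\<in>UNIV. \<Sum>x\<in>(UNIV::bool set). f u x) = (\<Sum>g\<in>PiE UNIV (\<lambda>_. UNIV). \<Prod>u\<in>UNIV. f u (g u))"
    by (rule prod_sum_PiE) auto
  also have "\<dots> = (\<Sum>g\<in>UNIV. \<Prod>u\<in>UNIV. f u (g u))" by simp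
  finally show ?thesis by (simp add: UNIV_bool add.commute)
qed

lemma B_sub_A:
  fixes E :: "('n::finite \<times> 'n) set" and \<gamma> \<kappa> :: "real^'n"
  assumes tr: "rooted_tree E r"
    and k: "\<forall>v. 0 \<le> \<kappa> $ v \<and> \<kappa> $ v \<le> 1" "\<forall>v. \<gamma> $ v = \<kappa> $ v * (\<Prod>v' \<in> anc E v. 1 - \<kappa> $ v')"
  shows "\<gamma> \<in> convex hull {z :: real ^ 'n. (\<forall>v. z $ v \<in> {0, 1}) \<and>
                   (\<forall>v. \<forall>v' \<in> anc E v. z $ v * z $ v' = 0)}" (is "_ \<in> convex hull ?Z")
proof -
  define zb :: "('n \<Rightarrow> bool) \<Rightarrow> real^'n" where
    "zb b = (\<chi> u. if b u \<and> (\<forall>a\<in>anc E u. \<not> b a) then 1 else 0)" for b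
  define w where "w b = (\<Prod>u\<in>UNIV. if b u then \<kappa>$u else 1 - \<kappa>$u)" for b
  have zZ: "zb b \<in> ?Z" for b
    by (auto simp: zb_def)
  have w0: "0 \<le> w b" for b unfolding w_def using k(1) by (intro prod_nonneg) auto
  have w1: "(\<Sum>b\<in>UNIV. w b) = 1" unfolding w_def by (subst prod_bool_sum) simp
  have "(\<Sum>b\<in>UNIV. w b *\<^sub>R zb b) \<in> convex hull ?Z"
  proof (rule convex_sum)
    show "\<And>i. i \<in> UNIV \<Longrightarrow> zb i \<in> convex hull ?Z" using zZ by (simp add: hull_inc)
  qed (use w0 w1 in auto)
  moreover have "(\<Sum>b\<in>UNIV. w b *\<^sub>R zb b) = \<gamma>"
  proof (rule iffD2[OF vec_eq_iff], rule allI)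
    fix v
    define h where "h u x = (if u = v then (if x then 1 else 0) else if u \<in> anc E v then (if x then 0 else 1) else (1::real))" for u x
    have nv: "v \<notin> anc E v" by (rule acyclic_tree[OF tr])
    have zh: "zb b $ v = (\<Prod>u\<in>UNIV. h u (b u))" for b
    proof (cases "b v \<and> (\<forall>a\<in>anc E v. \<not> b a)")
      case True
      hence "\<forall>u\<in>UNIV. h u (b u) = 1" by (auto simp: h_def)
      hence "(\<Prod>u\<in>UNIV. h u (b u)) = 1" by (intro prod.neutral) blast
      thus ?thesis using True by (simp add: zb_def)
    next
      case False
      have "\<exists>u. h u (b u) = 0"
      proof (cases "b v")
        case True
        then obtain a where "a \<in> anc E v" "b a" using False by blast
        thus ?thesis using nv by (intro exI[of _ a]) (auto simp: h_def)
      next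
        case False thus ?thesis by (intro exI[of _ v]) (auto simp: h_def)
      qed
      then obtain u where "h u (b u) = 0" by blast
      hence "(\<Prod>u\<in>UNIV. h u (b u)) = 0" using prod_zero[of UNIV "\<lambda>u. h u (b u)"] by auto
      moreover have "zb b $ v = 0" using False by (simp add: zb_def)
      ultimately show ?thesis by (simp only:)
    qed
    have "(\<Sum>b\<in>UNIV. w b *\<^sub>R zb b) $ v = (\<Sum>b\<in>UNIV. \<Prod>u\<in>UNIV. (if b u then \<kappa>$u else 1 - \<kappa>$u) * h u (b u))"
    proof -
      have "(\<Sum>b\<in>UNIV. w b *\<^sub>R zb b) $ v = (\<Sum>b\<in>UNIV. w b * zb b $ v)" by simp
      also have "\<dots> = (\<Sum>b\<in>UNIV. w b * (\<Prod>u\<in>UNIV. h u (b u)))" by (simp only: zh)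
      also have "\<dots> = (\<Sum>b\<in>UNIV. \<Prod>u\<in>UNIV. (if b u then \<kappa>$u else 1 - \<kappa>$u) * h u (b u))"
        by (simp only: w_def prod.distrib[symmetric])
      finally show ?thesis .
    qed
    also have "\<dots> = (\<Prod>u\<in>UNIV. \<kappa>$u * h u True + (1 - \<kappa>$u) * h u False)"
      using prod_bool_sum[of "\<lambda>u x. (if x then \<kappa>$u else 1 - \<kappa>$u) * h u x"]
      by (simp only: if_True if_False)
    also have "\<dots> = (\<Prod>u\<in>UNIV. if u \<in> insert v (anc E v) then (if u = v then \<kappa>$u else 1 - \<kappa>$u) else 1)"
      by (rule prod.cong[OF refl]) (auto simp: h_def)
    also have "\<dots> = (\<Prod>u\<in>insert v (anc E v). (if u = v then \<kappa>$u else 1 - \<kappa>$u))"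
      using prod.inter_restrict[OF finite_class.finite_UNIV, of "\<lambda>u. if u = v then \<kappa>$u else 1 - \<kappa>$u" "insert v (anc E v)"]
      unfolding Int_UNIV_left by (rule sym)
    also have "\<dots> = \<kappa>$v * (\<Prod>u\<in>anc E v. (if u = v then \<kappa>$u else 1 - \<kappa>$u))"
      using prod.insert[OF finite_class.finite_UNIV[THEN finite_subset[OF subset_UNIV]] nv, of "\<lambda>u. if u = v then \<kappa>$u else 1 - \<kappa>$u"]
      by (simp only: if_True simp_thms)
    also have "\<dots> = \<kappa>$v * (\<Prod>u\<in>anc E v. 1 - \<kappa>$u)"
    proof -
      have "(\<Prod>u\<in>anc E v. (if u = v then \<kappa>$u else 1 - \<kappa>$u)) = (\<Prod>u\<in>anc E v. 1 - \<kappa>$u)"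
        by (rule prod.cong[OF refl]) (use nv in auto)
      thus ?thesis by (simp only:)
    qed
    also have "\<dots> = \<gamma> $ v" using k(2) by metis
    finally show "(\<Sum>b\<in>UNIV. w b *\<^sub>R zb b) $ v = \<gamma> $ v" .
  qed
  ultimately show ?thesis by simp
qed


theorem proposition1:
  fixes E :: "('n::finite \<times> 'n) set" and r :: 'n
  assumes "rooted_tree E r"
  defines "Z \<equiv> {z :: real ^ 'n. (\<forall>v. z $ v \<in> {0, 1}) \<and>
                   (\<forall>v. \<forall>v' \<in> anc E v. z $ v * z $ v' = 0)}"
  shows "convex hull Z =
           {\<gamma> :: real ^ 'n. \<exists>\<kappa> :: real ^ 'n. (\<forall>v. 0 \<le> \<kappa> $ v \<and> \<kappa> $ v \<le> 1) \<and>
               (\<forall>v. \<gamma> $ v = \<kappa> $ v * (\<Prod>v' \<in> anc E v. 1 - \<kappa> $ v'))}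
       \<and> convex hull Z =
           {\<gamma> :: real ^ 'n. (\<forall>v. 0 \<le> \<gamma> $ v \<and> \<gamma> $ v \<le> 1) \<and>
               (\<forall>v. (\<Sum>v' \<in> insert v (anc E v). \<gamma> $ v') \<le> 1)}"
proof -
  define B where "B = {\<gamma> :: real ^ 'n. \<exists>\<kappa> :: real ^ 'n. (\<forall>v. 0 \<le> \<kappa> $ v \<and> \<kappa> $ v \<le> 1) \<and>
               (\<forall>v. \<gamma> $ v = \<kappa> $ v * (\<Prod>v' \<in> anc E v. 1 - \<kappa> $ v'))}"
  define C where "C = {\<gamma> :: real ^ 'n. (\<forall>v. 0 \<le> \<gamma> $ v \<and> \<gamma> $ v \<le> 1) \<and>
               (\<forall>v. (\<Sum>v' \<in> insert v (anc E v). \<gamma> $ v') \<le> 1)}"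
  have ZC: "Z \<subseteq> C"
  proof
    fix z assume z: "z \<in> Z"
    hence z1: "\<forall>v. z $ v \<in> {0::real, 1}" "\<forall>v. \<forall>v' \<in> anc E v. z $ v * z $ v' = 0"
      by (auto simp: Z_def)
    show "z \<in> C" unfolding C_def
    proof (intro CollectI conjI allI)
      fix v
      show "0 \<le> z $ v" "z $ v \<le> 1" using z1(1)[rule_format, of v] by auto
      show "(\<Sum>v' \<in> insert v (anc E v). z $ v') \<le> 1" by (rule Z_sub_C[OF assms(1) z1])
    qed
  qed
  have AC: "convex hull Z \<subseteq> C"
    by (rule hull_minimal[OF ZC]) (simp add: C_def C_convex)
  have CB: "C \<subseteq> B" unfolding C_def B_def using C_sub_B[OF assms(1)] by blast
  have BA: "B \<subseteq> convex hull Z" unfolding B_def Z_def using B_sub_A[OF assms(1)] by blast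
  have "convex hull Z = B" "convex hull Z = C" using AC CB BA by auto
  thus ?thesis unfolding B_def C_def by blast
qed

end
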